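(* For all (well-formed, possibly open) $\lambda$-terms $t$ and $s$, $t \approx_{\mathrm{nf}} s$ if and only if there exists a natural number $n > \max(\mathrm{fv}(t) \cup \mathrm{fv}(s))$ such that $\langle t, [], n\rangle_{\mathrm{ev}} \approx \langle s, [], n\rangle_{\mathrm{ev}}$, where $\approx$ is machine bisimilarity on configurations of the NFB machine.
   Context: Terms: $t,s ::= f \mid x \mid \lambda x.t \mid t\,s$, where $f$ ranges over free variables, identified with natural numbers, and $x$ over bound variables; terms are well formed (every $x$ is bound by an enclosing $\lambda$); $\mathrm{fv}(t)$ is the set of free variables of $t$. Stacks: $\pi ::= t::\pi \mid []$. KAM transitions (on open terms): $\langle t\,s, \pi\rangle \to \langle t, s :: \pi\rangle$ and $\langle \lambda x.t, s::\pi\rangle \to \langle t\{s/x\}, \pi\rangle$; $\to^*$ is its reflexive transitive closure. A relation $\mathcal{R}$ on terms is extended to stacks by: $\pi_1 \mathcal R \pi_2$ iff $\pi_1=\pi_2=[]$, or $\pi_1 = t::\pi_1'$, $\pi_2 = s::\pi_2'$, $t\mathcal R s$ and $\pi_1'\mathcal R\pi_2'$. Normal-form bisimulation: a symmetric relation $\mathcal{R}$ on terms such that $t \mathcal R s$ implies (1) if $\langle t, []\rangle \to^* \langle \lambda x.t', []\rangle$ then there is $s'$ with $\langle s,[]\rangle \to^* \langle \lambda x.s', []\rangle$ and $t'\{f/x\} \mathcal R s'\{f/x\}$ for a fresh $f$; (2) if $\langle t, []\rangle \to^* \langle f, \pi\rangle$ then there is $\pi'$ with $\langle s,[]\rangle\to^*\langle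 f,\pi'\rangle$ and $\pi\mathcal R\pi'$. Normal-form bisimilarity $\approx_{\mathrm{nf}}$ is the largest normal-form bisimulation. NFB machine: configurations $\langle t,\pi,n\rangle_{\mathrm{ev}}$ and $\langle \pi, n\rangle_{\mathrm{cont}}$ ($n\in\mathbb N$); transitions labelled by $\tau$ or by flags: $\langle t\,s,\pi,n\rangle_{\mathrm{ev}} \xrightarrow{\tau} \langle t, s::\pi, n\rangle_{\mathrm{ev}}$; $\langle \lambda x.t, s::\pi, n\rangle_{\mathrm{ev}} \xrightarrow{\tau} \langle t\{s/x\},\pi,n\rangle_{\mathrm{ev}}$; $\langle \lambda x.t, [], n\rangle_{\mathrm{ev}} \xrightarrow{\lambda} \langle t\{n/x\}, [], n+1\rangle_{\mathrm{ev}}$; $\langle f, \pi, n\rangle_{\mathrm{ev}} \xrightarrow{f} \langle \pi, n\rangle_{\mathrm{cont}}$ (the flag is the natural number $f$); $\langle [], n\rangle_{\mathrm{cont}} \xrightarrow{\mathsf{done}}$ (terminating transition, to no configuration); $\langle t::\pi, n\rangle_{\mathrm{cont}} \xrightarrow{\mathsf{enter}} \langle t, [], n\rangle_{\mathrm{ev}}$; $\langle t::\pi, n\rangle_{\mathrm{cont}} \xrightarrow{\mathsf{skip}} \langle \pi, n\rangle_{\mathrm{cont}}$. Machine bisimulation: a symmetric relation $\mathcal R$ on configurations such that $C_1\mathcal R C_2$ implies, for every flag $F$: (1) if $C_1 \xrightarrow{\tau}^* \xrightarrow{F} C_1'$ then there is $C_2'$ with $C_2 \xrightarrow{\tau}^*\xrightarrow{F}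 C_2'$ and $C_1'\mathcal R C_2'$; (2) if $C_1 \xrightarrow{\tau}^*\xrightarrow{F}$ by a terminating transition then $C_2 \xrightarrow{\tau}^*\xrightarrow{F}$ by a terminating transition. Machine bisimilarity $\approx$ is the largest machine bisimulation. *)

theory Defs
  imports Main
begin

text \<open>Locally nameless lambda-terms: free variables are natural numbers,
  bound variables are de Bruijn indices.\<close>

datatype trm = FVar nat | BVar nat | Lam trm | App trm trm

fun open_rec :: "nat \<Rightarrow> trm \<Rightarrow> trm \<Rightarrow> trm" where
  "open_rec k u (FVar f) = FVar f"
| "open_rec k u (BVar i) = (if i = k then u else BVar i)"
| "open_rec k u (Lam t) = Lam (open_rec (Suc k) u t)"
| "open_rec k u (App t s) = App (open_rec k u t) (open_rec k u s)"

text \<open>For Lam t, the body t with its bound variable replaced by u, i.e. t{u/x}.\<close>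
definition subst_bound :: "trm \<Rightarrow> trm \<Rightarrow> trm" where
  "subst_bound t u = open_rec 0 u t"

fun closed_at :: "nat \<Rightarrow> trm \<Rightarrow> bool" where
  "closed_at k (FVar f) = True"
| "closed_at k (BVar i) = (i < k)"
| "closed_at k (Lam t) = closed_at (Suc k) t"
| "closed_at k (App t s) = (closed_at k t \<and> closed_at k s)"

definition wf_trm :: "trm \<Rightarrow> bool" where
  "wf_trm t = closed_at 0 t"

fun fv :: "trm \<Rightarrow> nat set" where
  "fv (FVar f) = {f}"
| "fv (BVar i) = {}"
| "fv (Lam t) = fv t"
| "fv (App t s) = fv t \<union> fv s"

type_synonym stack = "trm list"

inductive kam_step :: "trm \<times> stack \<Rightarrow> trm \<times> stack \<Rightarrow> bool" where
  push: "kam_step (App t s, \<pi>) (t, s # \<pi>)"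
| beta: "kam_step (Lam t, s # \<pi>) (subst_bound t s, \<pi>)"

abbreviation kam_steps :: "trm \<times> stack \<Rightarrow> trm \<times> stack \<Rightarrow> bool" where
  "kam_steps \<equiv> kam_step\<^sup>*\<^sup>*"

definition nf_bisim :: "(trm \<Rightarrow> trm \<Rightarrow> bool) \<Rightarrow> bool" where
  "nf_bisim R \<longleftrightarrow> symp R \<and>
    (\<forall>t s. R t s \<longrightarrow>
       wf_trm t \<and> wf_trm s \<and>
       (\<forall>t'. kam_steps (t, []) (Lam t', []) \<longrightarrow>
          (\<exists>s'. kam_steps (s, []) (Lam s', []) \<and>
             (\<exists>f. f \<notin> fv t \<union> fv s \<and> R (subst_bound t' (FVar f)) (subst_bound s' (FVar f))))) \<and>
       (\<forall>f \<pi>. kam_steps (t, []) (FVar f, \<pi>) \<longrightarrow>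
          (\<exists>\<pi>'. kam_steps (s, []) (FVar f, \<pi>') \<and> list_all2 R \<pi> \<pi>')))"

definition nf_bisimilar :: "trm \<Rightarrow> trm \<Rightarrow> bool" where
  "nf_bisimilar t s \<longleftrightarrow> (\<exists>R. nf_bisim R \<and> R t s)"

datatype conf = Ev trm stack nat | Cont stack nat

datatype flag = FLam | FVarFlag nat | FDone | FEnter | FSkip

datatype label = Tau | Flag flag

text \<open>Transitions; the target None represents a terminating transition.\<close>
inductive mstep :: "conf \<Rightarrow> label \<Rightarrow> conf option \<Rightarrow> bool" where
  app: "mstep (Ev (App t s) \<pi> n) Tau (Some (Ev t (s # \<pi>) n))"
| beta: "mstep (Ev (Lam t) (s # \<pi>) n) Tau (Some (Ev (subst_bound t s) \<pi> n))"
| mlam: "mstep (Ev (Lam t) [] n) (Flag FLam) (Some (Ev (subst_bound t (FVar n)) [] (Suc n)))"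
| mvar: "mstep (Ev (FVar f) \<pi> n) (Flag (FVarFlag f)) (Some (Cont \<pi> n))"
| mdone: "mstep (Cont [] n) (Flag FDone) None"
| menter: "mstep (Cont (t # \<pi>) n) (Flag FEnter) (Some (Ev t [] n))"
| mskip: "mstep (Cont (t # \<pi>) n) (Flag FSkip) (Some (Cont \<pi> n))"

definition tau_step :: "conf \<Rightarrow> conf \<Rightarrow> bool" where
  "tau_step C C' \<longleftrightarrow> mstep C Tau (Some C')"

definition weak_step :: "conf \<Rightarrow> flag \<Rightarrow> conf option \<Rightarrow> bool" where
  "weak_step C F R \<longleftrightarrow> (\<exists>C0. tau_step\<^sup>*\<^sup>* C C0 \<and> mstep C0 (Flag F) R)"

definition machine_bisim :: "(conf \<Rightarrow> conf \<Rightarrow> bool) \<Rightarrow> bool" where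
  "machine_bisim R \<longleftrightarrow> symp R \<and>
    (\<forall>C1 C2. R C1 C2 \<longrightarrow>
      (\<forall>F. (\<forall>C1'. weak_step C1 F (Some C1') \<longrightarrow>
               (\<exists>C2'. weak_step C2 F (Some C2') \<and> R C1' C2')) \<and>
           (weak_step C1 F None \<longrightarrow> weak_step C2 F None)))"

definition machine_bisimilar :: "conf \<Rightarrow> conf \<Rightarrow> bool" where
  "machine_bisimilar C1 C2 \<longleftrightarrow> (\<exists>R. machine_bisim R \<and> R C1 C2)"

end

theory Submission
  imports Defs
begin

fun rename :: "(nat \<Rightarrow> nat) \<Rightarrow> trm \<Rightarrow> trm" where
  "rename \<sigma> (FVar f) = FVar (\<sigma> f)"
| "rename \<sigma> (BVar i) = BVar i"
| "rename \<sigma> (Lam t) = Lam (rename \<sigma> t)"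
| "rename \<sigma> (App t s) = App (rename \<sigma> t) (rename \<sigma> s)"

lemma rename_open: "rename \<sigma> (open_rec k u t) = open_rec k (rename \<sigma> u) (rename \<sigma> t)"
  by (induction t arbitrary: k) auto

lemma rename_subst: "rename \<sigma> (subst_bound t u) = subst_bound (rename \<sigma> t) (rename \<sigma> u)"
  by (simp add: subst_bound_def rename_open)

lemma rename_id_on: "(\<forall>x\<in>fv t. \<sigma> x = x) \<Longrightarrow> rename \<sigma> t = t"
  by (induction t) auto

lemma rename_rename: "rename \<sigma> (rename \<tau> t) = rename (\<sigma> \<circ> \<tau>) t"
  by (induction t) auto

lemma rename_inv: "\<forall>x. \<sigma> (\<sigma> x) = x \<Longrightarrow> rename \<sigma> (rename \<sigma> t) = t"
  by (induction t) auto

lemma map_rename_inv: "\<forall>x. \<sigma> (\<sigma> x) = x \<Longrightarrow> map (rename \<sigma>) (map (rename \<sigma>) \<pi>) = \<pi>"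
  by (induction \<pi>) (auto simp: rename_inv)

lemma fv_rename: "fv (rename \<sigma> t) = \<sigma> ` fv t"
  by (induction t) auto

lemma closed_rename: "closed_at k (rename \<sigma> t) = closed_at k t"
  by (induction t arbitrary: k) auto

lemma wf_rename: "wf_trm (rename \<sigma> t) = wf_trm t"
  by (simp add: wf_trm_def closed_rename)

lemma kam_step_rename:
  "kam_step x y \<Longrightarrow> kam_step (rename \<sigma> (fst x), map (rename \<sigma>) (snd x)) (rename \<sigma> (fst y), map (rename \<sigma>) (snd y))"
  by (induction rule: kam_step.induct) (auto simp: rename_subst intro: kam_step.intros)

lemma kam_steps_rename:
  "kam_steps x y \<Longrightarrow> kam_steps (rename \<sigma> (fst x), map (rename \<sigma>) (snd x)) (rename \<sigma> (fst y), map (rename \<sigma>) (snd y))"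
proof (induction rule: rtranclp_induct)
  case (step y z)
  then show ?case using kam_step_rename[of y z \<sigma>] by (meson rtranclp.rtrancl_into_rtrancl)
qed simp

lemma kam_steps_rename':
  "kam_steps (t, \<pi>) (t', \<pi>') \<Longrightarrow> kam_steps (rename \<sigma> t, map (rename \<sigma>) \<pi>) (rename \<sigma> t', map (rename \<sigma>) \<pi>')"
  using kam_steps_rename[of "(t,\<pi>)" "(t',\<pi>')" \<sigma>] by simp

section \<open>invariants\<close>

lemma fin_fv: "finite (fv t)"
  by (induction t) auto

lemma closed_mono: "closed_at k u \<Longrightarrow> k \<le> j \<Longrightarrow> closed_at j u"
  by (induction u arbitrary: k j) auto

lemma closed_open: "closed_at (Suc k) t \<Longrightarrow> closed_at 0 u \<Longrightarrow> closed_at k (open_rec k u t)"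
  by (induction t arbitrary: k) (auto intro: closed_mono)

lemma wf_subst: "closed_at 1 t \<Longrightarrow> wf_trm u \<Longrightarrow> wf_trm (subst_bound t u)"
  by (simp add: wf_trm_def subst_bound_def closed_open)

lemma fv_open: "fv (open_rec k u t) \<subseteq> fv t \<union> fv u"
  by (induction t arbitrary: k) auto

lemma fv_subst: "fv (subst_bound t u) \<subseteq> fv t \<union> fv u"
  by (simp add: subst_bound_def fv_open)

definition fvc :: "trm \<times> stack \<Rightarrow> nat set" where
  "fvc x = fv (fst x) \<union> (\<Union>u\<in>set (snd x). fv u)"

definition wfc :: "trm \<times> stack \<Rightarrow> bool" where
  "wfc x = (wf_trm (fst x) \<and> (\<forall>u\<in>set (snd x). wf_trm u))"

lemma kam_step_inv: "kam_step x y \<Longrightarrow> fvc y \<subseteq> fvc x \<and> (wfc x \<longrightarrow> wfc y)"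
proof (induction rule: kam_step.induct)
  case (push t s \<pi>)
  then show ?case by (auto simp: fvc_def wfc_def wf_trm_def)
next
  case (beta t s \<pi>)
  then show ?case using fv_subst[of t s] by (auto simp: fvc_def wfc_def wf_trm_def intro!: wf_subst[unfolded wf_trm_def])
qed

lemma kam_steps_inv: "kam_steps x y \<Longrightarrow> fvc y \<subseteq> fvc x \<and> (wfc x \<longrightarrow> wfc y)"
proof (induction rule: rtranclp_induct)
  case (step y z)
  then show ?case using kam_step_inv[of y z] by blast
qed simp

lemma kam_steps_inv':
  assumes "kam_steps (t, []) (t', \<pi>')"
  shows "fv t' \<union> (\<Union>u\<in>set \<pi>'. fv u) \<subseteq> fv t" "wf_trm t \<Longrightarrow> wf_trm t' \<and> (\<forall>u\<in>set \<pi>'. wf_trm u)"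
  using kam_steps_inv[OF assms] by (auto simp: fvc_def wfc_def)

section \<open>machine inversion\<close>

lemma tau_Ev: "tau_step (Ev t \<pi> n) C \<longleftrightarrow> (\<exists>t' \<pi>'. C = Ev t' \<pi>' n \<and> kam_step (t, \<pi>) (t', \<pi>'))"
  by (auto simp: tau_step_def mstep.simps kam_step.simps)

lemma tau_Cont: "\<not> tau_step (Cont \<pi> n) C"
  by (auto simp: tau_step_def mstep.simps)

lemma taus_Ev: "tau_step\<^sup>*\<^sup>* (Ev t \<pi> n) C \<Longrightarrow> \<exists>t' \<pi>'. C = Ev t' \<pi>' n \<and> kam_steps (t, \<pi>) (t', \<pi>')"
proof (induction rule: rtranclp_induct)
  case (step y z)
  then show ?case using tau_Ev by (metis rtranclp.rtrancl_into_rtrancl)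
qed simp

lemma kam_taus: "kam_steps x y \<Longrightarrow> tau_step\<^sup>*\<^sup>* (Ev (fst x) (snd x) n) (Ev (fst y) (snd y) n)"
proof (induction rule: rtranclp_induct)
  case (step y z)
  then show ?case using tau_Ev[of "fst y" "snd y" n "Ev (fst z) (snd z) n"]
    by (metis prod.collapse rtranclp.rtrancl_into_rtrancl)
qed simp

lemma kam_taus': "kam_steps (t, \<pi>) (t', \<pi>') \<Longrightarrow> tau_step\<^sup>*\<^sup>* (Ev t \<pi> n) (Ev t' \<pi>' n)"
  using kam_taus[of "(t,\<pi>)" "(t',\<pi>')" n] by simp

lemma taus_Cont: "tau_step\<^sup>*\<^sup>* (Cont \<pi> n) C \<Longrightarrow> C = Cont \<pi> n"
  by (metis converse_rtranclpE tau_Cont)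

lemma weak_Ev: "weak_step (Ev t [] n) F R \<longleftrightarrow>
   (\<exists>t'. kam_steps (t, []) (Lam t', []) \<and> F = FLam \<and> R = Some (Ev (subst_bound t' (FVar n)) [] (Suc n))) \<or>
   (\<exists>f \<pi>. kam_steps (t, []) (FVar f, \<pi>) \<and> F = FVarFlag f \<and> R = Some (Cont \<pi> n))"
proof
  assume "weak_step (Ev t [] n) F R"
  then obtain C0 where "tau_step\<^sup>*\<^sup>* (Ev t [] n) C0" "mstep C0 (Flag F) R" by (auto simp: weak_step_def)
  then show "(\<exists>t'. kam_steps (t, []) (Lam t', []) \<and> F = FLam \<and> R = Some (Ev (subst_bound t' (FVar n)) [] (Suc n))) \<or>
   (\<exists>f \<pi>. kam_steps (t, []) (FVar f, \<pi>) \<and> F = FVarFlag f \<and> R = Some (Cont \<pi> n))"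
    using taus_Ev by (fastforce simp: mstep.simps)
next
  assume "(\<exists>t'. kam_steps (t, []) (Lam t', []) \<and> F = FLam \<and> R = Some (Ev (subst_bound t' (FVar n)) [] (Suc n))) \<or>
   (\<exists>f \<pi>. kam_steps (t, []) (FVar f, \<pi>) \<and> F = FVarFlag f \<and> R = Some (Cont \<pi> n))"
  then show "weak_step (Ev t [] n) F R"
    unfolding weak_step_def using kam_taus' by (blast intro: mstep.intros)
qed

lemma weak_Cont: "weak_step (Cont \<pi> n) F R \<longleftrightarrow>
   (\<pi> = [] \<and> F = FDone \<and> R = None) \<or>
   (\<exists>a \<pi>1. \<pi> = a # \<pi>1 \<and> ((F = FEnter \<and> R = Some (Ev a [] n)) \<or> (F = FSkip \<and> R = Some (Cont \<pi>1 n))))"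
  unfolding weak_step_def
  by (auto dest!: taus_Cont simp: mstep.simps)

section \<open>nf bisimilarity\<close>

lemma nf_bisim_D:
  assumes "nf_bisim R" "R t s"
  shows "R s t" "wf_trm t" "wf_trm s"
    "\<And>t'. kam_steps (t, []) (Lam t', []) \<Longrightarrow>
          (\<exists>s'. kam_steps (s, []) (Lam s', []) \<and>
             (\<exists>f. f \<notin> fv t \<union> fv s \<and> R (subst_bound t' (FVar f)) (subst_bound s' (FVar f))))"
    "\<And>f \<pi>. kam_steps (t, []) (FVar f, \<pi>) \<Longrightarrow>
          (\<exists>\<pi>'. kam_steps (s, []) (FVar f, \<pi>') \<and> list_all2 R \<pi> \<pi>')"
proof -
  have S: "symp R" using assms(1) unfolding nf_bisim_def by (rule conjunct1)
  then show "R s t" using assms(2) by (rule sympD)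
  have "\<forall>t s. R t s \<longrightarrow>
       wf_trm t \<and> wf_trm s \<and>
       (\<forall>t'. kam_steps (t, []) (Lam t', []) \<longrightarrow>
          (\<exists>s'. kam_steps (s, []) (Lam s', []) \<and>
             (\<exists>f. f \<notin> fv t \<union> fv s \<and> R (subst_bound t' (FVar f)) (subst_bound s' (FVar f))))) \<and>
       (\<forall>f \<pi>. kam_steps (t, []) (FVar f, \<pi>) \<longrightarrow>
          (\<exists>\<pi>'. kam_steps (s, []) (FVar f, \<pi>') \<and> list_all2 R \<pi> \<pi>'))"
    using assms(1) unfolding nf_bisim_def by (rule conjunct2)
  from mp[OF spec[OF spec[OF this, of t], of s] assms(2)]
  have H: "wf_trm t \<and> wf_trm s \<and>
       (\<forall>t'. kam_steps (t, []) (Lam t', []) \<longrightarrow>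
          (\<exists>s'. kam_steps (s, []) (Lam s', []) \<and>
             (\<exists>f. f \<notin> fv t \<union> fv s \<and> R (subst_bound t' (FVar f)) (subst_bound s' (FVar f))))) \<and>
       (\<forall>f \<pi>. kam_steps (t, []) (FVar f, \<pi>) \<longrightarrow>
          (\<exists>\<pi>'. kam_steps (s, []) (FVar f, \<pi>') \<and> list_all2 R \<pi> \<pi>'))" .
  show "wf_trm t" using H by (rule conjunct1)
  show "wf_trm s" using H[THEN conjunct2] by (rule conjunct1)
  show "\<And>t'. kam_steps (t, []) (Lam t', []) \<Longrightarrow>
          (\<exists>s'. kam_steps (s, []) (Lam s', []) \<and>
             (\<exists>f. f \<notin> fv t \<union> fv s \<and> R (subst_bound t' (FVar f)) (subst_bound s' (FVar f))))"
    using H[THEN conjunct2, THEN conjunct2, THEN conjunct1] by (rule allE) (rule mp)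
  show "\<And>f \<pi>. kam_steps (t, []) (FVar f, \<pi>) \<Longrightarrow>
          (\<exists>\<pi>'. kam_steps (s, []) (FVar f, \<pi>') \<and> list_all2 R \<pi> \<pi>')"
    using H[THEN conjunct2, THEN conjunct2, THEN conjunct2] by (elim allE) (rule mp)
qed

lemma nfb_bisim: "nf_bisim nf_bisimilar"
  unfolding nf_bisim_def
proof (intro conjI allI impI)
  show "symp nf_bisimilar"
  proof (rule sympI)
    fix a b assume "nf_bisimilar a b"
    then obtain R where R: "nf_bisim R" "R a b" unfolding nf_bisimilar_def by (elim exE conjE)
    show "nf_bisimilar b a" unfolding nf_bisimilar_def
      by (intro exI[of _ R] conjI R(1) nf_bisim_D(1)[OF R])
  qed
next
  fix t s assume "nf_bisimilar t s"
  then obtain R where R: "nf_bisim R" "R t s" unfolding nf_bisimilar_def by (elim exE conjE)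
  have le: "\<And>a b. R a b \<Longrightarrow> nf_bisimilar a b" using R(1) unfolding nf_bisimilar_def by (intro exI[of _ R] conjI)
  show "wf_trm t" "wf_trm s" using nf_bisim_D(2,3)[OF R] by auto
  show "\<exists>s'. kam_steps (s, []) (Lam s', []) \<and>
             (\<exists>f. f \<notin> fv t \<union> fv s \<and> nf_bisimilar (subst_bound t' (FVar f)) (subst_bound s' (FVar f)))"
    if "kam_steps (t, []) (Lam t', [])" for t'
  proof -
    from nf_bisim_D(4)[OF R that] obtain s' f where
      "kam_steps (s, []) (Lam s', [])" "f \<notin> fv t \<union> fv s" "R (subst_bound t' (FVar f)) (subst_bound s' (FVar f))"
      by blast
    then show ?thesis using le by blast
  qed
  show "\<exists>\<pi>'. kam_steps (s, []) (FVar f, \<pi>') \<and> list_all2 nf_bisimilar \<pi> \<pi>'"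
    if "kam_steps (t, []) (FVar f, \<pi>)" for f \<pi>
  proof -
    from nf_bisim_D(5)[OF R that] obtain \<pi>' where
      "kam_steps (s, []) (FVar f, \<pi>')" "list_all2 R \<pi> \<pi>'" by blast
    moreover from this(2) have "list_all2 nf_bisimilar \<pi> \<pi>'" by (rule list_all2_mono) (rule le)
    ultimately show ?thesis by blast
  qed
qed

lemmas nfb_D = nf_bisim_D[OF nfb_bisim]

lemma nfb_rename:
  assumes inv: "\<forall>x. \<sigma> (\<sigma> x) = x" and "nf_bisimilar t s"
  shows "nf_bisimilar (rename \<sigma> t) (rename \<sigma> s)"
proof -
  define R where "R a b = (\<exists>t s. nf_bisimilar t s \<and> a = rename \<sigma> t \<and> b = rename \<sigma> s)" for a b
  have inj: "inj \<sigma>" using inv by (metis injI)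
  have "nf_bisim R"
    unfolding nf_bisim_def
  proof (intro conjI allI impI)
    show "symp R"
    proof (rule sympI)
      fix a b assume "R a b"
      then obtain t s where ts: "nf_bisimilar t s" "a = rename \<sigma> t" "b = rename \<sigma> s" unfolding R_def by blast
      show "R b a" unfolding R_def
        by (intro exI[of _ s] exI[of _ t] conjI nfb_D(1)[OF ts(1)] ts(2) ts(3))
    qed
  next
    fix a b assume "R a b"
    then obtain t s where ts: "nf_bisimilar t s" "a = rename \<sigma> t" "b = rename \<sigma> s" by (auto simp: R_def)
    have ta: "t = rename \<sigma> a" "s = rename \<sigma> b" using ts inv by (auto simp: rename_inv)
    show "wf_trm a" "wf_trm b" using nfb_D(2,3)[OF ts(1)] ts by (auto simp: wf_rename)
    show "\<exists>b'. kam_steps (b, []) (Lam b', []) \<and>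
             (\<exists>f. f \<notin> fv a \<union> fv b \<and> R (subst_bound a' (FVar f)) (subst_bound b' (FVar f)))"
      if "kam_steps (a, []) (Lam a', [])" for a'
    proof -
      note that
      from kam_steps_rename'[OF this, of \<sigma>] ta
      have "kam_steps (t, []) (Lam (rename \<sigma> a'), [])" by simp
      from nfb_D(4)[OF ts(1) this] obtain s' f where
        s': "kam_steps (s, []) (Lam s', [])" "f \<notin> fv t \<union> fv s"
        "nf_bisimilar (subst_bound (rename \<sigma> a') (FVar f)) (subst_bound s' (FVar f))" by blast
      have "kam_steps (b, []) (Lam (rename \<sigma> s'), [])" using kam_steps_rename'[OF s'(1), of \<sigma>] ts by simp
      moreover have "\<sigma> f \<notin> fv a \<union> fv b" using s'(2) ts inj by (auto simp: fv_rename inj_eq)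
      moreover have "R (subst_bound a' (FVar (\<sigma> f))) (subst_bound (rename \<sigma> s') (FVar (\<sigma> f)))"
      proof -
        have "rename \<sigma> (subst_bound (rename \<sigma> a') (FVar f)) = subst_bound a' (FVar (\<sigma> f))"
          "rename \<sigma> (subst_bound s' (FVar f)) = subst_bound (rename \<sigma> s') (FVar (\<sigma> f))"
          by (simp_all add: rename_subst rename_inv[OF inv])
        then show ?thesis unfolding R_def using s'(3) by metis
      qed
      ultimately show "\<exists>b'. kam_steps (b, []) (Lam b', []) \<and>
             (\<exists>f. f \<notin> fv a \<union> fv b \<and> R (subst_bound a' (FVar f)) (subst_bound b' (FVar f)))" by blast
    qed
    show "\<exists>\<pi>'. kam_steps (b, []) (FVar f, \<pi>') \<and> list_all2 R \<pi> \<pi>'"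
      if "kam_steps (a, []) (FVar f, \<pi>)" for f \<pi>
    proof -
      note that
      from kam_steps_rename'[OF this, of \<sigma>] ta
      have "kam_steps (t, []) (FVar (\<sigma> f), map (rename \<sigma>) \<pi>)" by simp
      from nfb_D(5)[OF ts(1) this] obtain \<pi>' where
        p: "kam_steps (s, []) (FVar (\<sigma> f), \<pi>')" "list_all2 nf_bisimilar (map (rename \<sigma>) \<pi>) \<pi>'" by blast
      have "kam_steps (b, []) (FVar f, map (rename \<sigma>) \<pi>')" using kam_steps_rename'[OF p(1), of \<sigma>] ts inv by simp
      moreover have "list_all2 R \<pi> (map (rename \<sigma>) \<pi>')"
        using p(2) unfolding list_all2_map1 list_all2_map2 R_def
        by (rule list_all2_mono) (metis rename_inv[OF inv])
      ultimately show "\<exists>\<pi>'. kam_steps (b, []) (FVar f, \<pi>') \<and> list_all2 R \<pi> \<pi>'" by blast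
    qed
  qed
  moreover have "R (rename \<sigma> t) (rename \<sigma> s)" using assms(2) by (auto simp: R_def)
  ultimately show ?thesis unfolding nf_bisimilar_def by (intro exI[of _ R] conjI)
qed

section \<open>machine bisimilarity\<close>

lemma mbisim_D:
  assumes "machine_bisim R" "R C1 C2"
  shows "R C2 C1"
    "\<And>F C1'. weak_step C1 F (Some C1') \<Longrightarrow> \<exists>C2'. weak_step C2 F (Some C2') \<and> R C1' C2'"
    "\<And>F. weak_step C1 F None \<Longrightarrow> weak_step C2 F None"
proof -
  have S: "symp R" using assms(1) unfolding machine_bisim_def by (rule conjunct1)
  then show "R C2 C1" using assms(2) by (rule sympD)
  have "\<forall>C1 C2. R C1 C2 \<longrightarrow>
      (\<forall>F. (\<forall>C1'. weak_step C1 F (Some C1') \<longrightarrow>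
               (\<exists>C2'. weak_step C2 F (Some C2') \<and> R C1' C2')) \<and>
           (weak_step C1 F None \<longrightarrow> weak_step C2 F None))"
    using assms(1) unfolding machine_bisim_def by (rule conjunct2)
  from mp[OF spec[OF spec[OF this, of C1], of C2] assms(2)]
  have H: "\<forall>F. (\<forall>C1'. weak_step C1 F (Some C1') \<longrightarrow>
               (\<exists>C2'. weak_step C2 F (Some C2') \<and> R C1' C2')) \<and>
           (weak_step C1 F None \<longrightarrow> weak_step C2 F None)" .
  show "\<And>F C1'. weak_step C1 F (Some C1') \<Longrightarrow> \<exists>C2'. weak_step C2 F (Some C2') \<and> R C1' C2'"
  proof -
    fix F C1' assume "weak_step C1 F (Some C1')"
    then show "\<exists>C2'. weak_step C2 F (Some C2') \<and> R C1' C2'"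
      using spec[OF H, of F, THEN conjunct1] by (elim allE) (erule mp)
  qed
  show "\<And>F. weak_step C1 F None \<Longrightarrow> weak_step C2 F None"
  proof -
    fix F assume "weak_step C1 F None"
    then show "weak_step C2 F None"
      using spec[OF H, of F, THEN conjunct2] by (rule rev_mp)
  qed
qed

lemma mb_bisim: "machine_bisim machine_bisimilar"
proof -
  have "symp machine_bisimilar"
  proof (rule sympI)
    fix a b assume "machine_bisimilar a b"
    then obtain R where R: "machine_bisim R" "R a b" unfolding machine_bisimilar_def by (elim exE conjE)
    show "machine_bisimilar b a" unfolding machine_bisimilar_def
      by (intro exI[of _ R] conjI R(1) mbisim_D(1)[OF R])
  qed
  moreover
  { fix C1 C2 F assume "machine_bisimilar C1 C2"
    then obtain R where R: "machine_bisim R" "R C1 C2" unfolding machine_bisimilar_def by (elim exE conjE)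
    have le: "\<And>a b. R a b \<Longrightarrow> machine_bisimilar a b" using R(1) unfolding machine_bisimilar_def by (intro exI[of _ R] conjI)
    have "(\<forall>C1'. weak_step C1 F (Some C1') \<longrightarrow>
               (\<exists>C2'. weak_step C2 F (Some C2') \<and> machine_bisimilar C1' C2')) \<and>
           (weak_step C1 F None \<longrightarrow> weak_step C2 F None)"
      using mbisim_D(2,3)[OF R] le by blast
  }
  ultimately show ?thesis unfolding machine_bisim_def by blast
qed

lemmas mb_D = mbisim_D[OF mb_bisim]

lemma list_all2_sym: "list_all2 P xs ys \<Longrightarrow> (\<And>a b. P a b \<Longrightarrow> P b a) \<Longrightarrow> list_all2 P ys xs"
  by (induction xs ys rule: list_all2_induct) auto

inductive Mr :: "conf \<Rightarrow> conf \<Rightarrow> bool" where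
  mev: "nf_bisimilar t s \<Longrightarrow> \<forall>f\<in>fv t \<union> fv s. f < n \<Longrightarrow> Mr (Ev t [] n) (Ev s [] n)"
| mcont: "list_all2 nf_bisimilar \<pi> \<pi>' \<Longrightarrow> \<forall>u\<in>set \<pi> \<union> set \<pi>'. \<forall>f\<in>fv u. f < n \<Longrightarrow> Mr (Cont \<pi> n) (Cont \<pi>' n)"

lemma fwd:
  assumes "nf_bisimilar t s" "\<forall>f\<in>fv t \<union> fv s. f < n"
  shows "machine_bisimilar (Ev t [] n) (Ev s [] n)"
proof -
  have "machine_bisim Mr"
    unfolding machine_bisim_def
  proof (rule conjI)
    show "symp Mr"
    proof (rule sympI)
      fix C1 C2 assume "Mr C1 C2"
      then consider (E) t s n where "C1 = Ev t [] n" "C2 = Ev s [] n" "nf_bisimilar t s" "\<forall>f\<in>fv t \<union> fv s. f < n"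
        | (C) \<pi> \<pi>' n where "C1 = Cont \<pi> n" "C2 = Cont \<pi>' n" "list_all2 nf_bisimilar \<pi> \<pi>'" "\<forall>u\<in>set \<pi> \<union> set \<pi>'. \<forall>f\<in>fv u. f < n"
        by (rule Mr.cases)
      then show "Mr C2 C1"
      proof cases
        case E
        have "nf_bisimilar s t" by (rule nfb_D(1)[OF E(3)])
        moreover have "\<forall>f\<in>fv s \<union> fv t. f < n" using E(4) by blast
        ultimately show ?thesis unfolding E(1,2) by (rule Mr.mev)
      next
        case C
        have "list_all2 nf_bisimilar \<pi>' \<pi>" using C(3) by (rule list_all2_sym) (rule nfb_D(1))
        moreover have "\<forall>u\<in>set \<pi>' \<union> set \<pi>. \<forall>f\<in>fv u. f < n" using C(4) by blast
        ultimately show ?thesis unfolding C(1,2) by (rule Mr.mcont)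
      qed
    qed
  next
    show "\<forall>C1 C2. Mr C1 C2 \<longrightarrow>
      (\<forall>F. (\<forall>C1'. weak_step C1 F (Some C1') \<longrightarrow>
               (\<exists>C2'. weak_step C2 F (Some C2') \<and> Mr C1' C2')) \<and>
           (weak_step C1 F None \<longrightarrow> weak_step C2 F None))"
  proof (intro allI impI)
    fix C1 C2 F
    assume "Mr C1 C2"
    then consider (E) t s n where "C1 = Ev t [] n" "C2 = Ev s [] n" "nf_bisimilar t s" "\<forall>f\<in>fv t \<union> fv s. f < n"
      | (C) \<pi> \<pi>' n where "C1 = Cont \<pi> n" "C2 = Cont \<pi>' n" "list_all2 nf_bisimilar \<pi> \<pi>'" "\<forall>u\<in>set \<pi> \<union> set \<pi>'. \<forall>f\<in>fv u. f < n"
      by (rule Mr.cases)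
    then show "(\<forall>C1'. weak_step C1 F (Some C1') \<longrightarrow> (\<exists>C2'. weak_step C2 F (Some C2') \<and> Mr C1' C2')) \<and>
           (weak_step C1 F None \<longrightarrow> weak_step C2 F None)"
    proof cases
      case E
      have A: "\<exists>C2'. weak_step C2 F (Some C2') \<and> Mr C1' C2'" if w: "weak_step C1 F (Some C1')" for C1'
      proof -
        from w[unfolded E(1) weak_Ev]
        consider (L) t' where "kam_steps (t, []) (Lam t', [])" "F = FLam" "C1' = Ev (subst_bound t' (FVar n)) [] (Suc n)"
          | (V) f \<pi> where "kam_steps (t, []) (FVar f, \<pi>)" "F = FVarFlag f" "C1' = Cont \<pi> n"
          by blast
        then show ?thesis
        proof cases
          case L
          from nfb_D(4)[OF E(3) L(1)] obtain s' f where
            s': "kam_steps (s, []) (Lam s', [])" "f \<notin> fv t \<union> fv s"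
            "nf_bisimilar (subst_bound t' (FVar f)) (subst_bound s' (FVar f))" by blast
          define \<sigma> where "\<sigma> x = (if x = f then n else if x = n then f else x)" for x
          have inv: "\<forall>x. \<sigma> (\<sigma> x) = x" by (simp add: \<sigma>_def)
          have ft: "fv t' \<subseteq> fv t" using kam_steps_inv'(1)[OF L(1)] by simp
          have fs: "fv s' \<subseteq> fv s" using kam_steps_inv'(1)[OF s'(1)] by simp
          have idt: "rename \<sigma> t' = t'"
            by (rule rename_id_on) (use ft s'(2) E(4) in \<open>auto simp: \<sigma>_def\<close>)
          have ids: "rename \<sigma> s' = s'"
            by (rule rename_id_on) (use fs s'(2) E(4) in \<open>auto simp: \<sigma>_def\<close>)
          have nb: "nf_bisimilar (subst_bound t' (FVar n)) (subst_bound s' (FVar n))"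
          proof -
            have "rename \<sigma> (FVar f) = FVar n" by (simp add: \<sigma>_def)
            then show ?thesis using nfb_rename[OF inv s'(3)] by (simp only: rename_subst idt ids)
          qed
          have f1: "fv (subst_bound t' (FVar n)) \<subseteq> fv t \<union> {n}" using fv_subst[of t' "FVar n"] ft by auto
          have f2: "fv (subst_bound s' (FVar n)) \<subseteq> fv s \<union> {n}" using fv_subst[of s' "FVar n"] fs by auto
          have bd: "\<forall>x\<in>fv (subst_bound t' (FVar n)) \<union> fv (subst_bound s' (FVar n)). x < Suc n"
          proof
            fix x assume "x \<in> fv (subst_bound t' (FVar n)) \<union> fv (subst_bound s' (FVar n))"
            then have "x \<in> fv t \<union> fv s \<or> x = n" using f1 f2 by blast
            then show "x < Suc n"
            proof
              assume "x \<in> fv t \<union> fv s"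
              with E(4) have "x < n" by blast
              then show ?thesis by simp
            qed simp
          qed
          have ws: "weak_step C2 F (Some (Ev (subst_bound s' (FVar n)) [] (Suc n)))"
            unfolding E(2) weak_Ev by (rule disjI1, rule exI[of _ s'], simp add: s'(1) L(2))
          show ?thesis unfolding L(3) using ws Mr.mev[OF nb bd] by blast
        next
          case V
          from nfb_D(5)[OF E(3) V(1)] obtain \<pi>' where
            p: "kam_steps (s, []) (FVar f, \<pi>')" "list_all2 nf_bisimilar \<pi> \<pi>'" by blast
          have "\<forall>u\<in>set \<pi> \<union> set \<pi>'. \<forall>f\<in>fv u. f < n"
            using kam_steps_inv'(1)[OF V(1)] kam_steps_inv'(1)[OF p(1)] E(4) by blast
          moreover have "weak_step C2 F (Some (Cont \<pi>' n))"
            unfolding E(2) weak_Ev using p(1) V(2) by blast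
          ultimately show ?thesis unfolding V(3) using p(2) by (blast intro: Mr.mcont)
        qed
      qed
      moreover have "\<not> weak_step C1 F None" unfolding E(1) weak_Ev by blast
      ultimately show ?thesis by blast
    next
      case C
      have A: "\<exists>C2'. weak_step C2 F (Some C2') \<and> Mr C1' C2'" if w: "weak_step C1 F (Some C1')" for C1'
      proof -
        from w[unfolded C(1) weak_Cont] obtain a \<pi>1 where
          a: "\<pi> = a # \<pi>1" "(F = FEnter \<and> C1' = Ev a [] n) \<or> (F = FSkip \<and> C1' = Cont \<pi>1 n)" by blast
        from C(3) a(1) obtain b \<pi>1' where b: "\<pi>' = b # \<pi>1'" "nf_bisimilar a b" "list_all2 nf_bisimilar \<pi>1 \<pi>1'"
          by (cases \<pi>') auto
        from a(2) show ?thesis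
        proof
          assume "F = FEnter \<and> C1' = Ev a [] n"
          moreover have "weak_step C2 FEnter (Some (Ev b [] n))" unfolding C(2) weak_Cont b(1) by blast
          ultimately show ?thesis using b C(4) a(1) by (auto intro: Mr.intros)
        next
          assume "F = FSkip \<and> C1' = Cont \<pi>1 n"
          moreover have "weak_step C2 FSkip (Some (Cont \<pi>1' n))" unfolding C(2) weak_Cont b(1) by blast
          ultimately show ?thesis using b C(4) a(1) by (auto intro: Mr.intros)
        qed
      qed
      moreover have "weak_step C2 F None" if "weak_step C1 F None"
        using that C(3) unfolding C(1,2) weak_Cont by auto
      ultimately show ?thesis by blast
    qed
  qed
  qed
  moreover have "Mr (Ev t [] n) (Ev s [] n)" using assms by (rule Mr.mev)
  ultimately show ?thesis unfolding machine_bisimilar_def by (intro exI[of _ Mr] conjI)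
qed

definition Rb :: "trm \<Rightarrow> trm \<Rightarrow> bool" where
  "Rb a b = (wf_trm a \<and> wf_trm b \<and> (\<exists>m. (\<forall>f\<in>fv a \<union> fv b. f < m) \<and> machine_bisimilar (Ev a [] m) (Ev b [] m)))"

lemma RbI: "wf_trm a \<Longrightarrow> wf_trm b \<Longrightarrow> \<forall>f\<in>fv a \<union> fv b. f < m \<Longrightarrow>
   machine_bisimilar (Ev a [] m) (Ev b [] m) \<Longrightarrow> Rb a b"
  unfolding Rb_def by (intro conjI exI[of _ m])

lemma RbE: "Rb a b \<Longrightarrow> (\<And>m. wf_trm a \<Longrightarrow> wf_trm b \<Longrightarrow> \<forall>f\<in>fv a \<union> fv b. f < m \<Longrightarrow>
   machine_bisimilar (Ev a [] m) (Ev b [] m) \<Longrightarrow> P) \<Longrightarrow> P"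
  unfolding Rb_def by (elim conjE exE)

lemma weak_Ev_Lam: "weak_step (Ev t [] n) FLam (Some C) \<Longrightarrow>
   \<exists>t'. kam_steps (t, []) (Lam t', []) \<and> C = Ev (subst_bound t' (FVar n)) [] (Suc n)"
  by (simp add: weak_Ev)

lemma weak_Ev_Var: "weak_step (Ev t [] n) (FVarFlag f) (Some C) \<Longrightarrow>
   \<exists>\<pi>. kam_steps (t, []) (FVar f, \<pi>) \<and> C = Cont \<pi> n"
  by (simp add: weak_Ev)

lemma weak_Ev_LamI: "kam_steps (t, []) (Lam t', []) \<Longrightarrow> weak_step (Ev t [] n) FLam (Some (Ev (subst_bound t' (FVar n)) [] (Suc n)))"
  unfolding weak_Ev by (rule disjI1, rule exI[of _ t'], simp)

lemma weak_Ev_VarI: "kam_steps (t, []) (FVar f, \<pi>) \<Longrightarrow> weak_step (Ev t [] n) (FVarFlag f) (Some (Cont \<pi> n))"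
  unfolding weak_Ev by (rule disjI2, rule exI[of _ f], rule exI[of _ \<pi>], simp)

lemma cont_list:
  "machine_bisimilar (Cont \<rho> m) (Cont \<rho>' m) \<Longrightarrow> (\<forall>u\<in>set \<rho> \<union> set \<rho>'. wf_trm u \<and> (\<forall>f\<in>fv u. f < m))
   \<Longrightarrow> list_all2 Rb \<rho> \<rho>'"
proof (induction \<rho> arbitrary: \<rho>')
  case Nil
  have "weak_step (Cont [] m) FDone None" by (simp add: weak_Cont)
  from mb_D(3)[OF Nil(1) this] have "\<rho>' = []" by (simp add: weak_Cont)
  then show ?case by simp
next
  case (Cons x \<rho>)
  have "weak_step (Cont (x # \<rho>) m) FEnter (Some (Ev x [] m))" by (simp add: weak_Cont)
  from mb_D(2)[OF Cons(2) this] obtain C where C: "weak_step (Cont \<rho>' m) FEnter (Some C)"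
    "machine_bisimilar (Ev x [] m) C" by blast
  from C(1) obtain y \<rho>1 where y0: "\<rho>' = y # \<rho>1" "C = Ev y [] m" by (auto simp: weak_Cont)
  have y: "\<rho>' = y # \<rho>1" "machine_bisimilar (Ev x [] m) (Ev y [] m)" using y0 C(2) by auto
  have "weak_step (Cont (x # \<rho>) m) FSkip (Some (Cont \<rho> m))" by (simp add: weak_Cont)
  from mb_D(2)[OF Cons(2) this] obtain D where D: "weak_step (Cont \<rho>' m) FSkip (Some D)"
    "machine_bisimilar (Cont \<rho> m) D" by blast
  from D(1) y(1) have "D = Cont \<rho>1 m" by (auto simp: weak_Cont)
  with D(2) have "machine_bisimilar (Cont \<rho> m) (Cont \<rho>1 m)" by simp
  from Cons.IH[OF this] Cons(3) y have "list_all2 Rb \<rho> \<rho>1" by auto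
  moreover have "Rb x y" using Cons(3) y by (intro RbI[of _ _ m]) auto
  ultimately show ?case using y(1) by simp
qed

lemma bwd_bisim: "nf_bisim Rb"
  unfolding nf_bisim_def
proof (intro conjI allI impI)
  show "symp Rb"
  proof (rule sympI)
    fix a b assume "Rb a b"
    then obtain m where m: "wf_trm a" "wf_trm b" "\<forall>f\<in>fv a \<union> fv b. f < m" "machine_bisimilar (Ev a [] m) (Ev b [] m)"
      by (rule RbE)
    have "\<forall>f\<in>fv b \<union> fv a. f < m" using m(3) by blast
    then show "Rb b a" using m(1,2) mb_D(1)[OF m(4)] by (intro RbI)
  qed
next
  fix a b assume ab: "Rb a b"
  then obtain m where m: "wf_trm a" "wf_trm b" "\<forall>f\<in>fv a \<union> fv b. f < m" "machine_bisimilar (Ev a [] m) (Ev b [] m)"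
    by (rule RbE)
  show "wf_trm a" "wf_trm b" by (fact m(1), fact m(2))
  show "\<exists>b'. kam_steps (b, []) (Lam b', []) \<and>
             (\<exists>f. f \<notin> fv a \<union> fv b \<and> Rb (subst_bound a' (FVar f)) (subst_bound b' (FVar f)))"
    if L: "kam_steps (a, []) (Lam a', [])" for a'
  proof -
    from mb_D(2)[OF m(4) weak_Ev_LamI[OF L]] obtain C where
      C: "weak_step (Ev b [] m) FLam (Some C)" "machine_bisimilar (Ev (subst_bound a' (FVar m)) [] (Suc m)) C"
      by blast
    from weak_Ev_Lam[OF C(1)] obtain b' where b0: "kam_steps (b, []) (Lam b', [])" "C = Ev (subst_bound b' (FVar m)) [] (Suc m)"
      by blast
    have b': "kam_steps (b, []) (Lam b', [])" "machine_bisimilar (Ev (subst_bound a' (FVar m)) [] (Suc m)) (Ev (subst_bound b' (FVar m)) [] (Suc m))"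
      using b0 C(2) by auto
    have wa: "wf_trm (subst_bound a' (FVar m))"
      using kam_steps_inv'(2)[OF L m(1)] by (intro wf_subst) (auto simp: wf_trm_def)
    have wb: "wf_trm (subst_bound b' (FVar m))"
      using kam_steps_inv'(2)[OF b'(1) m(2)] by (intro wf_subst) (auto simp: wf_trm_def)
    have f1: "fv (subst_bound a' (FVar m)) \<subseteq> fv a \<union> {m}" using fv_subst[of a' "FVar m"] kam_steps_inv'(1)[OF L] by auto
    have f2: "fv (subst_bound b' (FVar m)) \<subseteq> fv b \<union> {m}" using fv_subst[of b' "FVar m"] kam_steps_inv'(1)[OF b'(1)] by auto
    have bd: "\<forall>x\<in>fv (subst_bound a' (FVar m)) \<union> fv (subst_bound b' (FVar m)). x < Suc m"
    proof
      fix x assume "x \<in> fv (subst_bound a' (FVar m)) \<union> fv (subst_bound b' (FVar m))"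
      then have "x \<in> fv a \<union> fv b \<or> x = m" using f1 f2 by blast
      then show "x < Suc m"
      proof
        assume "x \<in> fv a \<union> fv b"
        with m(3) have "x < m" by blast
        then show ?thesis by simp
      qed simp
    qed
    have "Rb (subst_bound a' (FVar m)) (subst_bound b' (FVar m))"
      by (rule RbI[OF wa wb bd b'(2)])
    moreover have "m \<notin> fv a \<union> fv b" using m(3) by blast
    ultimately show ?thesis using b'(1) by blast
  qed
  show "\<exists>\<pi>'. kam_steps (b, []) (FVar f, \<pi>') \<and> list_all2 Rb \<pi> \<pi>'"
    if V: "kam_steps (a, []) (FVar f, \<pi>)" for f \<pi>
  proof -
    from mb_D(2)[OF m(4) weak_Ev_VarI[OF V]] obtain C where
      C: "weak_step (Ev b [] m) (FVarFlag f) (Some C)" "machine_bisimilar (Cont \<pi> m) C"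
      by blast
    from weak_Ev_Var[OF C(1)] obtain \<pi>' where p0: "kam_steps (b, []) (FVar f, \<pi>')" "C = Cont \<pi>' m"
      by blast
    have p: "kam_steps (b, []) (FVar f, \<pi>')" "machine_bisimilar (Cont \<pi> m) (Cont \<pi>' m)"
      using p0 C(2) by auto
    have "\<forall>u\<in>set \<pi> \<union> set \<pi>'. wf_trm u \<and> (\<forall>f\<in>fv u. f < m)"
      using kam_steps_inv'[OF V] kam_steps_inv'[OF p(1)] m(1,2,3) by blast
    from cont_list[OF p(2) this] p(1) show ?thesis by blast
  qed
qed

theorem theorem4p5:
  assumes "wf_trm t" and "wf_trm s"
  shows "nf_bisimilar t s \<longleftrightarrow>
         (\<exists>n::nat. (\<forall>f \<in> fv t \<union> fv s. f < n) \<and> machine_bisimilar (Ev t [] n) (Ev s [] n))"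
proof
  assume h: "nf_bisimilar t s"
  have fin: "finite (fv t \<union> fv s)" by (simp add: fin_fv)
  obtain n where "\<forall>f \<in> fv t \<union> fv s. f < n"
    using fin finite_nat_set_iff_bounded by blast
  then show "\<exists>n::nat. (\<forall>f \<in> fv t \<union> fv s. f < n) \<and> machine_bisimilar (Ev t [] n) (Ev s [] n)"
    using fwd[OF h] by blast
next
  assume "\<exists>n::nat. (\<forall>f \<in> fv t \<union> fv s. f < n) \<and> machine_bisimilar (Ev t [] n) (Ev s [] n)"
  then obtain n where "\<forall>f \<in> fv t \<union> fv s. f < n" "machine_bisimilar (Ev t [] n) (Ev s [] n)" by blast
  then have "Rb t s" using assms by (intro RbI)
  then show "nf_bisimilar t s" using bwd_bisim unfolding nf_bisimilar_def by (intro exI[of _ Rb] conjI)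
qed

end
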